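(* For a topological space $(X,\tau)$ the following are equivalent: (1) for every compact subset $F$ of $X$ and every $y\notin F$ there exists a set $A_y$ with $F\subseteq A_y$ and $y\notin A_y$ such that $A_y$ is either open or closed; (2) $X$ is $T_{\frac13}$, i.e. every compact subset of $X$ is $\lambda$-closed.
   Context: A $\Lambda$-set is an intersection of a family of open sets. A set $A$ is $\lambda$-closed if $A=L\cap C$ with $L$ a $\Lambda$-set and $C$ closed. *)

theory Defs
  imports "HOL-Analysis.Analysis"
begin

text \<open>A Lambda-set: intersection of a family of open sets (the empty family gives the whole space).\<close>
definition lambda_set :: "'a topology \<Rightarrow> 'a set \<Rightarrow> bool" where
  "lambda_set X L \<longleftrightarrow> (\<exists>\<U>. (\<forall>U\<in>\<U>. openin X U) \<and> L = topspace X \<inter> \<Inter>\<U>)"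

definition lambda_closed :: "'a topology \<Rightarrow> 'a set \<Rightarrow> bool" where
  "lambda_closed X A \<longleftrightarrow> (\<exists>L C. lambda_set X L \<and> closedin X C \<and> A = L \<inter> C)"

definition T_one_third :: "'a topology \<Rightarrow> bool" where
  "T_one_third X \<longleftrightarrow> (\<forall>F. compactin X F \<longrightarrow> lambda_closed X F)"

end

theory Submission
  imports Defs
begin

theorem mainTheorem9:
  fixes X :: "'a topology"
  shows "(\<forall>F y. compactin X F \<and> y \<in> topspace X \<and> y \<notin> F \<longrightarrow>
            (\<exists>A. F \<subseteq> A \<and> y \<notin> A \<and> (openin X A \<or> closedin X A)))
         \<longleftrightarrow> T_one_third X"
proof
  assume H: "\<forall>F y. compactin X F \<and> y \<in> topspace X \<and> y \<notin> F \<longrightarrow>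
            (\<exists>A. F \<subseteq> A \<and> y \<notin> A \<and> (openin X A \<or> closedin X A))"
  show "T_one_third X"
    unfolding T_one_third_def
  proof (intro allI impI)
    fix F assume cF: "compactin X F"
    have Fs: "F \<subseteq> topspace X" using cF compactin_subset_topspace by blast
    define L where "L = topspace X \<inter> \<Inter>{U. openin X U \<and> F \<subseteq> U}"
    define C where "C = topspace X \<inter> \<Inter>{U. closedin X U \<and> F \<subseteq> U}"
    have lL: "lambda_set X L" unfolding lambda_set_def L_def
      by (rule exI[where x="{U. openin X U \<and> F \<subseteq> U}"]) simp
    have Ceq: "C = \<Inter>(insert (topspace X) {U. closedin X U \<and> F \<subseteq> U})"
      unfolding C_def by simp
    have cC: "closedin X C" unfolding Ceq
      by (rule closedin_Inter) auto
    have "F = L \<inter> C"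
    proof
      show "F \<subseteq> L \<inter> C" using Fs unfolding L_def C_def by auto
      show "L \<inter> C \<subseteq> F"
      proof
        fix y assume y: "y \<in> L \<inter> C"
        show "y \<in> F"
        proof (rule ccontr)
          assume "y \<notin> F"
          moreover have "y \<in> topspace X" using y unfolding L_def by simp
          ultimately obtain A where A: "F \<subseteq> A" "y \<notin> A" "openin X A \<or> closedin X A"
            using H cF by meson
          have yL: "\<And>U. openin X U \<Longrightarrow> F \<subseteq> U \<Longrightarrow> y \<in> U" using y unfolding L_def by auto
          have yC: "\<And>U. closedin X U \<Longrightarrow> F \<subseteq> U \<Longrightarrow> y \<in> U" using y unfolding C_def by auto
          show False using A yL yC by metis
        qed
      qed
    qed
    then show "lambda_closed X F" unfolding lambda_closed_def using lL cC by blast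
  qed
next
  assume T: "T_one_third X"
  show "\<forall>F y. compactin X F \<and> y \<in> topspace X \<and> y \<notin> F \<longrightarrow>
            (\<exists>A. F \<subseteq> A \<and> y \<notin> A \<and> (openin X A \<or> closedin X A))"
  proof (intro allI impI)
    fix F y assume a: "compactin X F \<and> y \<in> topspace X \<and> y \<notin> F"
    then obtain L C where L: "lambda_set X L" and C: "closedin X C" and F: "F = L \<inter> C"
      using T a unfolding T_one_third_def lambda_closed_def by meson
    obtain \<U> where U: "\<forall>U\<in>\<U>. openin X U" "L = topspace X \<inter> \<Inter>\<U>"
      using L unfolding lambda_set_def by blast
    show "\<exists>A. F \<subseteq> A \<and> y \<notin> A \<and> (openin X A \<or> closedin X A)"
    proof (cases "y \<in> C")
      case False then show ?thesis using C F by blast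
    next
      case True
      then have "y \<notin> L" using a F by blast
      then obtain U where U1: "U \<in> \<U>" "y \<notin> U" using U a by blast
      have "F \<subseteq> U" using U1 U(2) F by auto
      then show ?thesis using U1 U(1) by blast
    qed
  qed
qed

end
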